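(* Let $q\in\mathbb C[z]$ with $q(0)=0$, let $n\in\mathbb N$ and $k>0$ with $\deg q<n$. For $c>0$ put $\delta(c)=(2kc)^{-1/n}$ and $q_c=k(cz^n-q)$. Then for every sufficiently large $c>0$, $q_c(\delta(c)\mathbb D)\subseteq\mathbb D$ and all zeros of $q_c$ belong to $\delta(c)\mathbb D$.
   Context: $\mathbb D=\{z\in\mathbb C:|z|<1\}$. *)

theory Defs
  imports "HOL-Analysis.Analysis" "HOL-Computational_Algebra.Polynomial"
begin

end

theory Submission
  imports Defs
begin

lemma poly_bound_le1:
  fixes p :: "complex poly"
  assumes "norm z \<le> 1"
  shows "norm (poly p z) \<le> (\<Sum>i\<le>degree p. norm (coeff p i))"
proof -
  have "norm (poly p z) \<le> (\<Sum>i\<le>degree p. norm (coeff p i * z ^ i))"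
    unfolding poly_altdef by (rule norm_sum)
  also have "\<dots> \<le> (\<Sum>i\<le>degree p. norm (coeff p i))"
  proof (rule sum_mono)
    fix i
    have "norm z ^ i \<le> 1" using assms by (simp add: power_le_one)
    then show "norm (coeff p i * z ^ i) \<le> norm (coeff p i)"
      by (simp add: norm_mult norm_power mult_left_le)
  qed
  finally show ?thesis .
qed

lemma poly_bound_ge1:
  fixes p :: "complex poly"
  assumes "norm z \<ge> 1"
  shows "norm (poly p z) \<le> (\<Sum>i\<le>degree p. norm (coeff p i)) * norm z ^ degree p"
proof -
  have "norm (poly p z) \<le> (\<Sum>i\<le>degree p. norm (coeff p i * z ^ i))"
    unfolding poly_altdef by (rule norm_sum)
  also have "\<dots> \<le> (\<Sum>i\<le>degree p. norm (coeff p i) * norm z ^ degree p)"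
  proof (rule sum_mono)
    fix i assume "i \<in> {..degree p}"
    then have "norm z ^ i \<le> norm z ^ degree p" using assms by (simp add: power_increasing)
    then show "norm (coeff p i * z ^ i) \<le> norm (coeff p i) * norm z ^ degree p"
      by (simp add: norm_mult norm_power mult_left_mono)
  qed
  also have "\<dots> = (\<Sum>i\<le>degree p. norm (coeff p i)) * norm z ^ degree p"
    by (simp add: sum_distrib_right)
  finally show ?thesis .
qed

theorem lemma3p5:
  fixes q :: "complex poly" and n :: nat and k :: real
  assumes "poly q 0 = 0" and "k > 0" and "degree q < n"
  shows "\<forall>\<^sub>F c in at_top.
           (let \<delta> = (2 * k * c) powr (- 1 / real n);
                qc = (\<lambda>z::complex. complex_of_real k * (complex_of_real c * z ^ n - poly q z))
            in qc ` ball 0 \<delta> \<subseteq> ball 0 1 \<and> {z. qc z = 0} \<subseteq> ball 0 \<delta>)"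
proof -
  obtain a p where qp: "q = pCons a p" by (cases q) auto
  have a0: "a = 0" using assms(1) qp by simp
  have qz: "poly q z = z * poly p z" for z using qp a0 by simp
  have dp: "degree p < n" using assms(3) qp a0 by (cases "p = 0") (auto simp: degree_pCons_eq)
  have n1: "n \<ge> 1" using assms(3) by simp
  define B where "B = (\<Sum>i\<le>degree p. norm (coeff p i))"
  have B0: "B \<ge> 0" unfolding B_def by (simp add: sum_nonneg)
  define d where "d = (\<lambda>c::real. (2 * k * c) powr (- 1 / real n))"
  have lim: "(d \<longlongrightarrow> 0) at_top" unfolding d_def
  proof (rule tendsto_neg_powr)
    show "- 1 / real n < 0" using n1 by simp
    show "filterlim (\<lambda>x. 2 * k * x) at_top at_top"
      using assms(2) by (intro filterlim_tendsto_pos_mult_at_top[OF tendsto_const]) (auto simp: filterlim_ident)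
  qed
  have ev1: "\<forall>\<^sub>F c in at_top. d c < min 1 (1 / (2 * k * (B + 1)))"
    using lim B0 assms(2) by (intro order_tendstoD(2)) auto
  have ev2: "\<forall>\<^sub>F c in at_top. c > B" by (rule eventually_gt_at_top)
  show ?thesis
  proof (rule eventually_mono[OF eventually_conj[OF ev1 ev2]])
    fix c assume H: "d c < min 1 (1 / (2 * k * (B + 1))) \<and> B < c"
    have c0: "c > 0" using H B0 by linarith
    have kc: "2 * k * c > 0" using c0 assms(2) by simp
    have dpos: "d c > 0" unfolding d_def using kc c0 assms(2) by simp
    have d1: "d c < 1" using H by simp
    have X: "0 < 2*k*(B+1)" using assms(2) B0 by simp
    have "d c < 1/(2*k*(B+1))" using H by simp
    then have "d c * (2*k*(B+1)) < 1" using X by (simp only: less_divide_eq)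
    then have "2 * k * (B + 1) * d c < 1" by (simp only: mult.commute)
    then have kBd: "2 * k * B * d c < 1"
      using assms(2) dpos
      by (smt (verit) mult_right_mono mult_left_mono mult_nonneg_nonneg)
    have dn: "d c ^ n = 1 / (2 * k * c)"
    proof -
      have nn: "real n * (- 1 / real n) = -1" using n1 by simp
      have "d c ^ n = (2 * k * c) powr (real n * (- 1 / real n))"
        unfolding d_def by (rule powr_power) (use kc in linarith)
      also have "\<dots> = (2 * k * c) powr (-1)" by (simp only: nn)
      also have "\<dots> = 1 / (2 * k * c)" using kc by (rule powr_neg_one)
      finally show ?thesis .
    qed
    have kcdn: "k * c * d c ^ n = 1/2" using dn c0 assms(2) by (simp add: mult.assoc)
    define qc where "qc = (\<lambda>z::complex. complex_of_real k * (complex_of_real c * z ^ n - poly q z))"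
    have A: "qc ` ball 0 (d c) \<subseteq> ball 0 1"
    proof
      fix w assume "w \<in> qc ` ball 0 (d c)"
      then obtain z where z: "norm z < d c" and w: "w = qc z" by auto
      have zn: "norm z ^ n < d c ^ n" using z n1 by (intro power_strict_mono) auto
      have pz: "norm (poly p z) \<le> B" unfolding B_def using z d1 by (intro poly_bound_le1) simp
      have t: "norm (complex_of_real c * z ^ n - z * poly p z) \<le> c * norm z ^ n + norm z * norm (poly p z)"
        using norm_triangle_ineq4[of "complex_of_real c * z ^ n" "z * poly p z"] c0
        by (simp add: norm_mult norm_power)
      have t2: "norm z * norm (poly p z) \<le> d c * B"
        using z pz B0 dpos by (intro mult_mono) auto
      have t3: "c * norm z ^ n < c * d c ^ n" using zn c0 by (rule mult_strict_left_mono)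
      have "norm w = k * norm (complex_of_real c * z ^ n - z * poly p z)"
        using w assms(2) by (simp add: qc_def qz norm_mult)
      also have "\<dots> \<le> k * (c * norm z ^ n + norm z * norm (poly p z))"
        using assms(2) t by (intro mult_left_mono) auto
      also have "\<dots> < k * (c * d c ^ n + d c * B)"
        using assms(2) t2 t3 by (intro mult_strict_left_mono) auto
      also have "\<dots> = k * c * d c ^ n + k * B * d c" by (simp add: algebra_simps)
      also have "\<dots> < 1" using kcdn kBd by linarith
      finally show "w \<in> ball 0 1" by simp
    qed
    have Z: "{z. qc z = 0} \<subseteq> ball 0 (d c)"
    proof
      fix z assume "z \<in> {z. qc z = 0}"
      then have "complex_of_real c * z ^ n = z * poly p z"
        using assms(2) by (simp add: qc_def qz)
      show "z \<in> ball 0 (d c)"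
      proof (cases "z = 0")
        case True then show ?thesis using dpos by simp
      next
        case False
        have zn: "z ^ n = z * z ^ (n - 1)" using n1 by (cases n) auto
        have eq: "complex_of_real c * z ^ (n - 1) = poly p z"
          using \<open>complex_of_real c * z ^ n = z * poly p z\<close> False zn by (simp add: algebra_simps)
        then have "norm (complex_of_real c * z ^ (n - 1)) = norm (poly p z)" by simp
        then have eqn: "c * norm z ^ (n - 1) = norm (poly p z)"
          using c0 by (simp add: norm_mult norm_power)
        show ?thesis
        proof (cases "norm z \<ge> 1")
          case True
          have "c * norm z ^ (n - 1) \<le> B * norm z ^ degree p"
            using eqn poly_bound_ge1[OF True, of p] by (simp add: B_def)
          also have "\<dots> \<le> B * norm z ^ (n - 1)"
            using True dp B0 by (intro mult_left_mono power_increasing) auto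
          finally have "c \<le> B" using True by (simp add: mult_le_cancel_right less_le_trans[OF zero_less_one])
          then show ?thesis using H by simp
        next
          case False
          have le: "c * norm z ^ (n - 1) \<le> B"
            using eqn poly_bound_le1[of z p] False by (simp add: B_def)
          show ?thesis
          proof (rule ccontr)
            assume "z \<notin> ball 0 (d c)"
            then have "d c \<le> norm z" by simp
            then have dz: "d c ^ (n - 1) \<le> norm z ^ (n - 1)" using dpos by (intro power_mono) auto
            have "c * d c ^ (n - 1) \<le> B" using mult_left_mono[OF dz, of c] c0 le by linarith
            then have "c * d c ^ (n - 1) * d c \<le> B * d c" using dpos by (simp add: mult_right_mono)
            moreover have "d c ^ (n - 1) * d c = d c ^ n" using n1 by (cases n) (auto simp: mult.commute)
            ultimately have "c * d c ^ n \<le> B * d c" by (simp add: mult.assoc)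
            then have "k * (c * d c ^ n) \<le> k * (B * d c)" using assms(2) by simp
            then have "1/2 \<le> k * B * d c" using kcdn by (simp add: algebra_simps)
            then show False using kBd by simp
          qed
        qed
      qed
    qed
    show "let \<delta> = (2 * k * c) powr (- 1 / real n);
                qc = (\<lambda>z::complex. complex_of_real k * (complex_of_real c * z ^ n - poly q z))
            in qc ` ball 0 \<delta> \<subseteq> ball 0 1 \<and> {z. qc z = 0} \<subseteq> ball 0 \<delta>"
      using A Z unfolding Let_def qc_def d_def by blast
  qed
qed

end
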